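(* Let $\bar B\subset\Sigma_2$ be a proper real trigonal curve. Then the set of non-separating real proper sections (with respect to $\bar B$), regarded as a subset of the affine space $\{(a,b,c)\in\mathbb R^3\}$ of real proper sections $y=ax^2+bx+c$, has exactly two connected components $\mathcal S_+$ and $\mathcal S_-$, each of which is nonempty, open and convex.
   Context: $\Sigma_2$ is the Hirzebruch surface of degree $2$ with exceptional section $E$ ($E^2=-2$), with its standard real structure. Use real affine coordinates $(x,y)$ in which $E$ is $\{y=\infty\}$; near the fiber $x=\infty$ use $u=1/x$, $v=y/x^2$. A proper section is a section disjoint from $E$; a real proper section has the form $y=ax^2+bx+c$ with $a,b,c\in\mathbb R$ (near $x=\infty$: $v=a+bu+cu^2$). A proper trigonal curve is a curve $\bar B\subset\Sigma_2$ disjoint from $E$ given by $y^3+y^2p_2(x)+yp_4(x)+p_6(x)=0$ with $\deg p_d\le d$; it is real if the $p_d$ have real coefficients. For a real proper section $L$, the complement $(\Sigma_2)_{\mathbb R}\setminus(L_{\mathbb R}\cup E_{\mathbb R})$ has two regions (chessboard coloring); $L$ is non-separating with respect to $\bar B$ if $\bar B_{\mathbb R}$ lies entirely in one of these two regions. *)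

theory Defs
  imports "HOL-Analysis.Analysis" "HOL-Computational_Algebra.Polynomial"
begin

text \<open>Real points of the Hirzebruch surface Sigma_2 away from the exceptional
section E.  A point is either in the affine chart (x,y), or on the fiber
x = infinity, where it has coordinates u = 0 and v.\<close>
datatype sigma2_pt = Aff real real | Inf real

text \<open>A proper trigonal curve y^3 + y^2 p2(x) + y p4(x) + p6(x) = 0 with
deg p_d <= d; real since the p_d are real polynomials.\<close>
definition proper_trigonal :: "real poly \<Rightarrow> real poly \<Rightarrow> real poly \<Rightarrow> bool" where
  "proper_trigonal p2 p4 p6 \<longleftrightarrow> degree p2 \<le> 2 \<and> degree p4 \<le> 4 \<and> degree p6 \<le> 6"

text \<open>Near x = infinity (u = 1/x, v = y/x^2) the
equation becomes v^3 + v^2 u^2 p2(1/u) + v u^4 p4(1/u) + u^6 p6(1/u) = 0,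
which at u = 0 reads v^3 + v^2 [x^2]p2 + v [x^4]p4 + [x^6]p6 = 0.\<close>
definition trig_real_pts :: "real poly \<Rightarrow> real poly \<Rightarrow> real poly \<Rightarrow> sigma2_pt set" where
  "trig_real_pts p2 p4 p6 =
     {Aff x y | x y. y^3 + y^2 * poly p2 x + y * poly p4 x + poly p6 x = 0}
   \<union> {Inf v | v. v^3 + v^2 * coeff p2 2 + v * coeff p4 4 + coeff p6 6 = 0}"

text \<open>Signed position of a point relative to the real proper section
L = (a,b,c): y = a x^2 + b x + c (near infinity v = a + b u + c u^2).
The two regions of the complement of L_R \<union> E_R are where this is
positive, resp. negative.\<close>
fun sect_side :: "real \<times> real \<times> real \<Rightarrow> sigma2_pt \<Rightarrow> real" where
  "sect_side (a, b, c) (Aff x y) = y - (a * x^2 + b * x + c)"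
| "sect_side (a, b, c) (Inf v) = v - a"

definition non_separating :: "sigma2_pt set \<Rightarrow> real \<times> real \<times> real \<Rightarrow> bool" where
  "non_separating B L \<longleftrightarrow> (\<forall>P\<in>B. sect_side L P > 0) \<or> (\<forall>P\<in>B. sect_side L P < 0)"

end

theory Submission
  imports Defs
begin



definition rp :: "real poly \<Rightarrow> nat \<Rightarrow> real \<Rightarrow> real" where
  "rp p n u = (\<Sum>i\<le>n. coeff p i * u^(n-i))"

lemma poly_le: "degree p \<le> n \<Longrightarrow> poly p (x::real) = (\<Sum>i\<le>n. coeff p i * x^i)"
  unfolding poly_altdef
  by (rule sum.mono_neutral_left) (auto simp: coeff_eq_0)

lemma rp_inv: assumes "degree p \<le> n" "x \<noteq> 0"
  shows "rp p n (1/x) = poly p x / x^n"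
proof -
  have "rp p n (1/x) * x^n = (\<Sum>i\<le>n. coeff p i * x^i)"
    unfolding rp_def sum_distrib_right
  proof (rule sum.cong[OF refl])
    fix i assume "i \<in> {..n}"
    then have "x^n = x^(n-i) * x^i" by (simp add: power_add[symmetric])
    then show "coeff p i * (1 / x) ^ (n - i) * x ^ n = coeff p i * x ^ i"
      using assms(2) by (simp add: power_one_over field_simps)
  qed
  then show ?thesis using assms by (simp add: poly_le field_simps)
qed

lemma rp0: "rp p n 0 = coeff p n"
proof -
  have "rp p n 0 = (\<Sum>i\<le>n. if i = n then coeff p i else 0)"
    unfolding rp_def by (rule sum.cong) (auto simp: power_0_left)
  then show ?thesis by simp
qed

lemma root_bound:
  fixes y A B C :: real
  assumes "y^3 + A*y^2 + B*y + C = 0"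
  shows "\<bar>y\<bar> \<le> 1 + \<bar>A\<bar> + \<bar>B\<bar> + \<bar>C\<bar>"
proof (cases "\<bar>y\<bar> \<le> 1")
  case False
  have "y^3 = -(A*y^2 + B*y + C)" using assms by linarith
  then have "\<bar>y\<bar>^3 = \<bar>A*y^2 + B*y + C\<bar>"
    by (metis abs_minus_cancel power_abs)
  also have "\<dots> \<le> \<bar>A\<bar>*\<bar>y\<bar>^2 + \<bar>B\<bar>*\<bar>y\<bar> + \<bar>C\<bar>"
  proof -
    have "\<bar>A*y^2 + B*y + C\<bar> \<le> \<bar>A*y^2\<bar> + \<bar>B*y\<bar> + \<bar>C\<bar>"
      by (rule order_trans[OF abs_triangle_ineq]) (simp add: abs_triangle_ineq)
    then show ?thesis by (simp add: abs_mult)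
  qed
  also have "\<dots> \<le> (\<bar>A\<bar> + \<bar>B\<bar> + \<bar>C\<bar>) * \<bar>y\<bar>^2"
  proof -
    have y1: "\<bar>y\<bar> * 1 \<le> \<bar>y\<bar>*\<bar>y\<bar>" using False by (intro mult_left_mono) auto
    have "\<bar>B\<bar>*\<bar>y\<bar> \<le> \<bar>B\<bar>*\<bar>y\<bar>^2" using y1
      by (intro mult_left_mono) (auto simp: power2_eq_square)
    moreover have "\<bar>C\<bar> \<le> \<bar>C\<bar>*\<bar>y\<bar>^2" using False
      by (metis abs_ge_zero le_less_linear less_1_mult mult.right_neutral mult_left_mono nless_le one_le_power order_less_imp_le power2_eq_square)
    ultimately show ?thesis by (simp add: algebra_simps)
  qed
  finally have "\<bar>y\<bar> * \<bar>y\<bar>^2 \<le> (\<bar>A\<bar> + \<bar>B\<bar> + \<bar>C\<bar>) * \<bar>y\<bar>^2"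
    by (simp add: power3_eq_cube power2_eq_square mult.assoc)
  then have "\<bar>y\<bar> \<le> \<bar>A\<bar> + \<bar>B\<bar> + \<bar>C\<bar>" using False
    by (simp add: mult_le_cancel_right)
  then show ?thesis by simp
qed simp

lemma cubic_root:
  fixes A B C :: real
  shows "\<exists>y. y^3 + A*y^2 + B*y + C = 0"
proof -
  define R where "R = 1 + \<bar>A\<bar> + \<bar>B\<bar> + \<bar>C\<bar>"
  have R1: "R \<ge> 1" unfolding R_def by simp
  have RR: "R \<le> R^2" using R1 by (simp add: power2_eq_square)
  have R2: "1 \<le> R^2" using R1 by (simp add: one_le_power)
  have bB: "\<bar>B\<bar>*R \<le> \<bar>B\<bar>*R^2" by (rule mult_left_mono[OF RR]) simp
  have cC: "\<bar>C\<bar> \<le> \<bar>C\<bar>*R^2" using mult_left_mono[OF R2, of "\<bar>C\<bar>"] by simp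
  have aA1: "-\<bar>A\<bar>*R^2 \<le> A*R^2" by (rule mult_right_mono) auto
  have aA2: "A*R^2 \<le> \<bar>A\<bar>*R^2" by (rule mult_right_mono) auto
  have bB1: "-\<bar>B\<bar>*R \<le> B*R" by (rule mult_right_mono) (use R1 in auto)
  have bB2: "B*R \<le> \<bar>B\<bar>*R" by (rule mult_right_mono) (use R1 in auto)
  have cC1: "-\<bar>C\<bar> \<le> C" "C \<le> \<bar>C\<bar>" by auto
  have key: "R * R^2 - \<bar>A\<bar>*R^2 - \<bar>B\<bar>*R^2 - \<bar>C\<bar>*R^2 = R^2" by (simp add: R_def algebra_simps)
  have p3: "R^3 = R * R^2" "(-R)^3 = -(R*R^2)" "(-R)^2 = R^2" by (simp_all add: power3_eq_cube power2_eq_square)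
  have z: "R^2 \<ge> 0" by simp
  have a: "R^3 + A*R^2 + B*R + C \<ge> 0"
    using key p3 z aA1 bB bB1 cC cC1 by linarith
  have b: "(-R)^3 + A*(-R)^2 + B*(-R) + C \<le> 0"
    using key p3 aA2 bB bB1 cC cC1 by (simp add: p3) (use z in linarith)
  have "\<exists>y. -R \<le> y \<and> y \<le> R \<and> y^3 + A*y^2 + B*y + C = 0"
    by (rule IVT'[where f="\<lambda>y. y^3 + A*y^2 + B*y + C", OF b a]) (use R1 in \<open>auto intro!: continuous_intros\<close>)
  then show ?thesis by blast
qed



lemma comp2:
  fixes A B :: "'a::topological_space set"
  assumes oA: "open A" and oB: "open B" and d: "A \<inter> B = {}" and cA: "connected A" and cB: "connected B"
    and nA: "A \<noteq> {}" and nB: "B \<noteq> {}"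
  shows "components (A \<union> B) = {A, B}"
proof -
  have sub: "D \<subseteq> A \<or> D \<subseteq> B" if "connected D" "D \<subseteq> A \<union> B" for D
  proof -
    have "A \<inter> B \<inter> D = {}" using d by simp
    from connectedD[OF that(1) oA oB this that(2)] that(2) show ?thesis by auto
  qed
  have AC: "A \<in> components (A \<union> B)"
    unfolding in_components_maximal
  proof (intro conjI allI impI)
    fix D assume D: "D \<noteq> {} \<and> A \<subseteq> D \<and> D \<subseteq> A \<union> B \<and> connected D"
    then have "D \<subseteq> A \<or> D \<subseteq> B" using sub by simp
    then show "D = A" using D d nA by auto
  qed (use nA cA in auto)
  have BC: "B \<in> components (A \<union> B)"
    unfolding in_components_maximal
  proof (intro conjI allI impI)
    fix D assume D: "D \<noteq> {} \<and> B \<subseteq> D \<and> D \<subseteq> A \<union> B \<and> connected D"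
    then have "D \<subseteq> A \<or> D \<subseteq> B" using sub by simp
    then show "D = B" using D d nB by auto
  qed (use nB cB in auto)
  have "C = A \<or> C = B" if C: "C \<in> components (A \<union> B)" for C
  proof -
    have "C \<noteq> {}" "C \<subseteq> A \<union> B" using in_components_nonempty[OF C] in_components_subset[OF C] by auto
    then have "C \<inter> A \<noteq> {} \<or> C \<inter> B \<noteq> {}" by auto
    then show ?thesis using components_eq[OF C AC] components_eq[OF C BC] by auto
  qed
  then show ?thesis using AC BC by auto
qed

lemma open_forall_compact:
  fixes K :: "'a::euclidean_space set" and h :: "'a \<Rightarrow> 'b::euclidean_space \<Rightarrow> real"
  assumes K: "compact K" and h: "continuous_on UNIV (\<lambda>w. h (fst w) (snd w))"
  shows "open {L. \<forall>p\<in>K. 0 < h p L}"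
proof -
  have "closed {L. \<exists>p. p \<in> K \<and> (p,L) \<in> {w. h (fst w) (snd w) \<le> 0}}"
    by (rule closed_compact_projection[OF K], rule closed_Collect_le[OF h]) simp
  moreover have "- {L. \<forall>p\<in>K. 0 < h p L} = {L. \<exists>p. p \<in> K \<and> (p,L) \<in> {w. h (fst w) (snd w) \<le> 0}}"
    by (auto simp: not_less)
  ultimately show ?thesis by (metis open_closed)
qed

lemma side_convex:
  assumes "u + v = 1"
  shows "sect_side (u *\<^sub>R L1 + v *\<^sub>R L2) P = u * sect_side L1 P + v * sect_side L2 P"
proof -
  obtain a1 b1 c1 where L1: "L1 = (a1,b1,c1)" by (cases L1) auto
  obtain a2 b2 c2 where L2: "L2 = (a2,b2,c2)" by (cases L2) auto
  have v: "v = 1 - u" using assms by simp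
  show ?thesis
    by (cases P) (simp_all add: L1 L2 v algebra_simps)
qed

lemma convex_S: "convex {L. \<forall>P\<in>B. 0 < s * sect_side L P}"
proof (rule convexI)
  fix x y :: "real\<times>real\<times>real" and u v :: real
  assume x: "x \<in> {L. \<forall>P\<in>B. 0 < s * sect_side L P}" and y: "y \<in> {L. \<forall>P\<in>B. 0 < s * sect_side L P}"
    and u: "0 \<le> u" and v: "0 \<le> v" and uv: "u + v = 1"
  show "u *\<^sub>R x + v *\<^sub>R y \<in> {L. \<forall>P\<in>B. 0 < s * sect_side L P}"
  proof (intro CollectI ballI)
    fix P assume P: "P \<in> B"
    have "s * sect_side (u *\<^sub>R x + v *\<^sub>R y) P = u * (s * sect_side x P) + v * (s * sect_side y P)"
      using side_convex[OF uv] by (simp add: algebra_simps)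
    moreover have "0 < u * (s * sect_side x P) + v * (s * sect_side y P)"
    proof (cases "u = 0")
      case True then show ?thesis using uv y P by simp
    next
      case False
      then have "0 < u * (s * sect_side x P)" using u x P by simp
      moreover have "0 \<le> v * (s * sect_side y P)" using v y P by (simp add: less_imp_le)
      ultimately show ?thesis by linarith
    qed
    ultimately show "0 < s * sect_side (u *\<^sub>R x + v *\<^sub>R y) P" by simp
  qed
qed



lemma bound_gen:
  fixes A B C :: "real \<Rightarrow> real"
  assumes "continuous_on {-1..1} (\<lambda>x. \<bar>A x\<bar> + \<bar>B x\<bar> + \<bar>C x\<bar>)"
  shows "\<exists>R. \<forall>x y. \<bar>x\<bar> \<le> 1 \<longrightarrow> y^3 + A x * y^2 + B x * y + C x = 0 \<longrightarrow> \<bar>y\<bar> \<le> R"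
proof -
  obtain x0 where x0: "x0 \<in> {-1..1}" and M: "\<forall>x\<in>{-1..1}. \<bar>A x\<bar> + \<bar>B x\<bar> + \<bar>C x\<bar> \<le> \<bar>A x0\<bar> + \<bar>B x0\<bar> + \<bar>C x0\<bar>"
    using continuous_attains_sup[OF compact_Icc _ assms] by force
  show ?thesis
  proof (rule exI[of _ "1 + (\<bar>A x0\<bar> + \<bar>B x0\<bar> + \<bar>C x0\<bar>)"], intro allI impI)
    fix x y :: real assume x: "\<bar>x\<bar> \<le> 1" and e: "y^3 + A x * y^2 + B x * y + C x = 0"
    have "\<bar>y\<bar> \<le> 1 + \<bar>A x\<bar> + \<bar>B x\<bar> + \<bar>C x\<bar>" by (rule root_bound[OF e])
    moreover have "x \<in> {-1..1}" using x by auto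
    ultimately show "\<bar>y\<bar> \<le> 1 + (\<bar>A x0\<bar> + \<bar>B x0\<bar> + \<bar>C x0\<bar>)" using M by fastforce
  qed
qed

lemma compact_gen:
  fixes A B C :: "real \<Rightarrow> real"
  assumes "continuous_on {-1..1} (\<lambda>x. \<bar>A x\<bar> + \<bar>B x\<bar> + \<bar>C x\<bar>)"
    and "continuous_on UNIV (\<lambda>z::real\<times>real. snd z^3 + A (fst z) * snd z^2 + B (fst z) * snd z + C (fst z))"
  shows "compact {z::real\<times>real. \<bar>fst z\<bar> \<le> 1 \<and> snd z^3 + A (fst z) * snd z^2 + B (fst z) * snd z + C (fst z) = 0}"
proof -
  obtain R where R: "\<forall>x y. \<bar>x\<bar> \<le> 1 \<longrightarrow> y^3 + A x * y^2 + B x * y + C x = 0 \<longrightarrow> \<bar>y\<bar> \<le> R"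
    using bound_gen[OF assms(1)] by blast
  have eq: "{z::real\<times>real. \<bar>fst z\<bar> \<le> 1 \<and> snd z^3 + A (fst z) * snd z^2 + B (fst z) * snd z + C (fst z) = 0}
    = ({-1..1} \<times> {-R..R}) \<inter> {z. snd z^3 + A (fst z) * snd z^2 + B (fst z) * snd z + C (fst z) = 0}"
  proof (intro set_eqI iffI)
    fix z :: "real\<times>real"
    assume "z \<in> {z::real\<times>real. \<bar>fst z\<bar> \<le> 1 \<and> snd z^3 + A (fst z) * snd z^2 + B (fst z) * snd z + C (fst z) = 0}"
    then have h: "\<bar>fst z\<bar> \<le> 1" "snd z^3 + A (fst z) * snd z^2 + B (fst z) * snd z + C (fst z) = 0" by auto
    then have "\<bar>snd z\<bar> \<le> R" using R by blast
    then show "z \<in> ({-1..1} \<times> {-R..R}) \<inter> {z. snd z^3 + A (fst z) * snd z^2 + B (fst z) * snd z + C (fst z) = 0}"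
      using h by (cases z) (auto simp: abs_le_iff)
  qed (auto simp: abs_le_iff)
  show ?thesis unfolding eq
    by (intro compact_Int_closed compact_Times compact_Icc closed_Collect_eq assms(2)) simp
qed


definition g1 :: "real\<times>real \<Rightarrow> real\<times>real\<times>real \<Rightarrow> real" where
  "g1 z L = snd z - (fst L * fst z^2 + fst (snd L) * fst z + snd (snd L))"
definition g2 :: "real\<times>real \<Rightarrow> real\<times>real\<times>real \<Rightarrow> real" where
  "g2 z L = snd z - (fst L + fst (snd L) * fst z + snd (snd L) * fst z^2)"

lemma mem_aff: "Aff x y \<in> trig_real_pts p2 p4 p6 \<longleftrightarrow> y^3 + poly p2 x * y^2 + poly p4 x * y + poly p6 x = 0"
  unfolding trig_real_pts_def by (auto simp: algebra_simps)

lemma mem_inf: "Inf v \<in> trig_real_pts p2 p4 p6 \<longleftrightarrow> v^3 + rp p2 2 0 * v^2 + rp p4 4 0 * v + rp p6 6 0 = 0"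
  unfolding trig_real_pts_def rp0 by (auto simp: algebra_simps)

lemma scal: fixes x y p :: real assumes "x \<noteq> 0"
  shows "(y/x^2)^3 * x^6 = y^3" "(p/x^2) * (y/x^2)^2 * x^6 = p * y^2"
    "(p/x^4) * (y/x^2) * x^6 = p*y" "p/x^6 * x^6 = p"
proof -
  have e: "x^6 = x^2*x^2*x^2" "x^4 = x^2*x^2" by (simp_all flip: power_add)
  have n: "x^2 \<noteq> 0" using assms by simp
  show "(y/x^2)^3 * x^6 = y^3" "(p/x^2) * (y/x^2)^2 * x^6 = p * y^2"
    "(p/x^4) * (y/x^2) * x^6 = p*y" "p/x^6 * x^6 = p"
    unfolding e using n by (simp_all add: field_simps power3_eq_cube power2_eq_square[of "y/x^2"] power2_eq_square[of y])
qed

lemma inv_eq: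
  assumes "proper_trigonal p2 p4 p6" "x \<noteq> 0"
  shows "(y/x^2)^3 + rp p2 2 (1/x) * (y/x^2)^2 + rp p4 4 (1/x) * (y/x^2) + rp p6 6 (1/x)
       = (y^3 + poly p2 x * y^2 + poly p4 x * y + poly p6 x) / x^6"
proof -
  have r: "rp p2 2 (1/x) = poly p2 x / x^2" "rp p4 4 (1/x) = poly p4 x / x^4" "rp p6 6 (1/x) = poly p6 x / x^6"
    using assms unfolding proper_trigonal_def by (simp_all add: rp_inv)
  have "((y/x^2)^3 + rp p2 2 (1/x) * (y/x^2)^2 + rp p4 4 (1/x) * (y/x^2) + rp p6 6 (1/x)) * x^6
       = y^3 + poly p2 x * y^2 + poly p4 x * y + poly p6 x"
    unfolding r distrib_right scal[OF assms(2)] ..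
  then show ?thesis using assms(2) by (simp add: eq_divide_eq)
qed

lemma charact:
  assumes pt: "proper_trigonal p2 p4 p6"
  defines "K1 \<equiv> {z::real\<times>real. \<bar>fst z\<bar> \<le> 1 \<and> snd z^3 + poly p2 (fst z) * snd z^2 + poly p4 (fst z) * snd z + poly p6 (fst z) = 0}"
    and "K2 \<equiv> {z::real\<times>real. \<bar>fst z\<bar> \<le> 1 \<and> snd z^3 + rp p2 2 (fst z) * snd z^2 + rp p4 4 (fst z) * snd z + rp p6 6 (fst z) = 0}"
  shows "{L. \<forall>P\<in>trig_real_pts p2 p4 p6. 0 < s * sect_side L P}
       = {L. \<forall>z\<in>K1. 0 < s * g1 z L} \<inter> {L. \<forall>z\<in>K2. 0 < s * g2 z L}"
proof (intro set_eqI iffI)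
  fix L :: "real\<times>real\<times>real"
  obtain a b c where L: "L = (a,b,c)" by (cases L) auto
  {
    assume H: "L \<in> {L. \<forall>P\<in>trig_real_pts p2 p4 p6. 0 < s * sect_side L P}"
    have 1: "0 < s * g1 z L" if "z \<in> K1" for z
    proof -
      obtain x y where z: "z = (x,y)" by (cases z)
      have "Aff x y \<in> trig_real_pts p2 p4 p6" using that unfolding K1_def z mem_aff by simp
      then have "0 < s * sect_side L (Aff x y)" using H by blast
      then show ?thesis by (simp add: g1_def z L)
    qed
    have 2: "0 < s * g2 z L" if "z \<in> K2" for z
    proof -
      obtain u v where z: "z = (u,v)" by (cases z)
      have e: "v^3 + rp p2 2 u * v^2 + rp p4 4 u * v + rp p6 6 u = 0" using that unfolding K2_def z by simp
      show ?thesis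
      proof (cases "u = 0")
        case True
        have "Inf v \<in> trig_real_pts p2 p4 p6" using e True unfolding mem_inf by simp
        then have "0 < s * sect_side L (Inf v)" using H by blast
        then show ?thesis using True by (simp add: g2_def z L)
      next
        case False
        define x where "x = 1/u"
        define y where "y = v/u^2"
        have x0: "x \<noteq> 0" using False by (simp add: x_def)
        have ux: "1/x = u" "y/x^2 = v" using False by (simp_all add: x_def y_def power_one_over)
        have "(y^3 + poly p2 x * y^2 + poly p4 x * y + poly p6 x) / x^6 = 0"
          using inv_eq[OF pt x0, of y] e ux by simp
        then have "Aff x y \<in> trig_real_pts p2 p4 p6" using x0 unfolding mem_aff by simp
        then have pos: "0 < s * sect_side L (Aff x y)" using H by blast
        have "sect_side L (Aff x y) = (v - (a + b*u + c*u^2)) / u^2"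
          using False by (simp add: L x_def y_def field_simps power2_eq_square)
        then have "0 < s * (v - (a + b*u + c*u^2)) / u^2" using pos by simp
        then have "0 < s * (v - (a + b*u + c*u^2))"
          using False by (simp add: zero_less_divide_iff)
        then show ?thesis by (simp add: g2_def z L)
      qed
    qed
    show "L \<in> {L. \<forall>z\<in>K1. 0 < s * g1 z L} \<inter> {L. \<forall>z\<in>K2. 0 < s * g2 z L}" using 1 2 by blast
  }
  {
    assume H: "L \<in> {L. \<forall>z\<in>K1. 0 < s * g1 z L} \<inter> {L. \<forall>z\<in>K2. 0 < s * g2 z L}"
    show "L \<in> {L. \<forall>P\<in>trig_real_pts p2 p4 p6. 0 < s * sect_side L P}"
    proof (intro CollectI ballI)
      fix P assume P: "P \<in> trig_real_pts p2 p4 p6"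
      show "0 < s * sect_side L P"
      proof (cases P)
        case (Aff x y)
        have e: "y^3 + poly p2 x * y^2 + poly p4 x * y + poly p6 x = 0" using P Aff mem_aff by simp
        show ?thesis
        proof (cases "\<bar>x\<bar> \<le> 1")
          case True
          then have "(x,y) \<in> K1" using e unfolding K1_def by simp
          then have "0 < s * g1 (x,y) L" using H by blast
          then show ?thesis by (simp add: g1_def Aff L)
        next
          case False
          then have x0: "x \<noteq> 0" by auto
          have "\<bar>1/x\<bar> \<le> 1" using False by (simp add: abs_div)
          moreover have "(y/x^2)^3 + rp p2 2 (1/x) * (y/x^2)^2 + rp p4 4 (1/x) * (y/x^2) + rp p6 6 (1/x) = 0"
            using inv_eq[OF pt x0, of y] e by simp
          ultimately have "(1/x, y/x^2) \<in> K2" unfolding K2_def by simp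
          then have "0 < s * g2 (1/x, y/x^2) L" using H by blast
          then have pos: "0 < s * (y/x^2 - (a + b * (1/x) + c * (1/x)^2))" by (simp add: g2_def L)
          have "sect_side L P = x^2 * (y/x^2 - (a + b * (1/x) + c * (1/x)^2))"
            using x0 by (simp add: Aff L field_simps power2_eq_square)
          then have "s * sect_side L P = x^2 * (s * (y/x^2 - (a + b * (1/x) + c * (1/x)^2)))"
            by (simp only: mult.left_commute)
          moreover have "0 < x^2" using x0 by simp
          ultimately show ?thesis using pos by (simp only: zero_less_mult_iff) blast
        qed
      next
        case (Inf v)
        have "(0, v) \<in> K2" using P Inf mem_inf unfolding K2_def by simp
        then have "0 < s * g2 (0,v) L" using H by blast
        then show ?thesis by (simp add: g2_def Inf L)
      qed
    qed
  }
qed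


theorem lemmaA1:
  fixes p2 p4 p6 :: "real poly"
  assumes "proper_trigonal p2 p4 p6"
  shows "\<exists>Sp Sm. components {L. non_separating (trig_real_pts p2 p4 p6) L} = {Sp, Sm}
           \<and> Sp \<noteq> Sm \<and> Sp \<noteq> {} \<and> Sm \<noteq> {}
           \<and> open Sp \<and> open Sm \<and> convex Sp \<and> convex Sm"
proof -
  define T where "T = trig_real_pts p2 p4 p6"
  define Ss where "Ss s = {L. \<forall>P\<in>T. 0 < s * sect_side L P}" for s :: real
  define K1 where "K1 = {z::real\<times>real. \<bar>fst z\<bar> \<le> 1 \<and> snd z^3 + poly p2 (fst z) * snd z^2 + poly p4 (fst z) * snd z + poly p6 (fst z) = 0}"
  define K2 where "K2 = {z::real\<times>real. \<bar>fst z\<bar> \<le> 1 \<and> snd z^3 + rp p2 2 (fst z) * snd z^2 + rp p4 4 (fst z) * snd z + rp p6 6 (fst z) = 0}"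
  have ch: "Ss s = {L. \<forall>z\<in>K1. 0 < s * g1 z L} \<inter> {L. \<forall>z\<in>K2. 0 < s * g2 z L}" for s
    unfolding Ss_def T_def K1_def K2_def by (rule charact[OF assms])
  have c1: "continuous_on {-1..1} (\<lambda>x. \<bar>poly p2 x\<bar> + \<bar>poly p4 x\<bar> + \<bar>poly p6 x\<bar>)"
    by (intro continuous_intros)
  have c2: "continuous_on {-1..1} (\<lambda>x. \<bar>rp p2 2 x\<bar> + \<bar>rp p4 4 x\<bar> + \<bar>rp p6 6 x\<bar>)"
    unfolding rp_def by (intro continuous_intros)
  have cK1: "compact K1" unfolding K1_def
    by (rule compact_gen[OF c1]) (intro continuous_intros)
  have cK2: "compact K2" unfolding K2_def
    by (rule compact_gen[OF c2]) (unfold rp_def, intro continuous_intros)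
  have og1: "continuous_on UNIV (\<lambda>w. s * g1 (fst w) (snd w))" for s
    unfolding g1_def by (intro continuous_intros)
  have og2: "continuous_on UNIV (\<lambda>w. s * g2 (fst w) (snd w))" for s
    unfolding g2_def by (intro continuous_intros)
  have op: "open (Ss s)" for s
    unfolding ch
    by (intro open_Int open_forall_compact[OF cK1 og1] open_forall_compact[OF cK2 og2])
  have cv: "convex (Ss s)" for s unfolding Ss_def by (rule convex_S)
  have un: "{L. non_separating T L} = Ss 1 \<union> Ss (-1)"
    unfolding Ss_def non_separating_def by (auto simp: mult_less_0_iff)
  obtain v where "v^3 + rp p2 2 0 * v^2 + rp p4 4 0 * v + rp p6 6 0 = 0"
    using cubic_root by blast
  then have vT: "Inf v \<in> T" unfolding T_def mem_inf .
  have dj: "Ss 1 \<inter> Ss (-1) = {}"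
  proof (rule ccontr)
    assume "Ss 1 \<inter> Ss (-1) \<noteq> {}"
    then obtain L where "L \<in> Ss 1" "L \<in> Ss (-1)" by blast
    then have "0 < sect_side L (Inf v)" "0 < - sect_side L (Inf v)" using vT unfolding Ss_def by auto
    then show False by linarith
  qed
  obtain R1 where R1: "\<forall>x y. \<bar>x\<bar> \<le> 1 \<longrightarrow> y^3 + poly p2 x * y^2 + poly p4 x * y + poly p6 x = 0 \<longrightarrow> \<bar>y\<bar> \<le> R1"
    using bound_gen[OF c1] by blast
  obtain R2 where R2: "\<forall>x y. \<bar>x\<bar> \<le> 1 \<longrightarrow> y^3 + rp p2 2 x * y^2 + rp p4 4 x * y + rp p6 6 x = 0 \<longrightarrow> \<bar>y\<bar> \<le> R2"
    using bound_gen[OF c2] by blast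
  define K where "K = \<bar>R1\<bar> + \<bar>R2\<bar> + 1"
  have b1: "\<bar>snd z\<bar> < K" if "z \<in> K1" for z
  proof -
    have "\<bar>snd z\<bar> \<le> R1" using R1 that unfolding K1_def by blast
    then show ?thesis unfolding K_def by linarith
  qed
  have b2: "\<bar>snd z\<bar> < K" if "z \<in> K2" for z
  proof -
    have "\<bar>snd z\<bar> \<le> R2" using R2 that unfolding K2_def by blast
    then show ?thesis unfolding K_def by linarith
  qed
  have K0: "0 < K" unfolding K_def by simp
  have ne1: "(-K, 0, -K) \<in> Ss 1"
    unfolding ch
  proof (intro IntI CollectI ballI)
    fix z assume z: "z \<in> K1"
    have "0 \<le> K * fst z^2" using K0 by simp
    then show "0 < 1 * g1 z (-K, 0, -K)" using b1[OF z] unfolding g1_def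
      by (simp only: fst_conv snd_conv abs_less_iff mult_minus_left mult_1 mult_minus1 mult_zero_left) linarith
  next
    fix z assume z: "z \<in> K2"
    have "0 \<le> K * fst z^2" using K0 by simp
    then show "0 < 1 * g2 z (-K, 0, -K)" using b2[OF z] unfolding g2_def
      by (simp only: fst_conv snd_conv abs_less_iff mult_minus_left mult_1 mult_minus1 mult_zero_left) linarith
  qed
  have ne2: "(K, 0, K) \<in> Ss (-1)"
    unfolding ch
  proof (intro IntI CollectI ballI)
    fix z assume z: "z \<in> K1"
    have "0 \<le> K * fst z^2" using K0 by simp
    then show "0 < -1 * g1 z (K, 0, K)" using b1[OF z] unfolding g1_def
      by (simp only: fst_conv snd_conv abs_less_iff mult_minus_left mult_1 mult_minus1 mult_zero_left) linarith
  next
    fix z assume z: "z \<in> K2"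
    have "0 \<le> K * fst z^2" using K0 by simp
    then show "0 < -1 * g2 z (K, 0, K)" using b2[OF z] unfolding g2_def
      by (simp only: fst_conv snd_conv abs_less_iff mult_minus_left mult_1 mult_minus1 mult_zero_left) linarith
  qed
  have "components {L. non_separating T L} = {Ss 1, Ss (-1)}"
    unfolding un using ne1 ne2 dj
    by (intro comp2 op convex_connected cv) auto
  moreover have "Ss 1 \<noteq> Ss (-1)" using dj ne1 by blast
  ultimately show ?thesis unfolding T_def using ne1 ne2 op cv by blast
qed

end
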